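(* Let $\mathcal R$ be an $(m|n)$-rational difference operator, and let $\mathcal R=\mathcal D_{\bar0}\mathcal D_{\bar1}^{-1}$ be the fractional factorization with $\mathrm{ord}\,\mathcal D_{\bar1}=n$ and constant term of $\mathcal D_{\bar1}$ equal to $1$. Let $V=\ker\mathcal D_{\bar0}$, $U=\ker\mathcal D_{\bar1}$ (kernels in $\mathbb{K}$). Let $\{v_1,\dots,v_m\}$ be a basis of $V$, $\{u_1,\dots,u_n\}$ a basis of $U$, and $\boldsymbol s\in S_{m|n}$. Define $d_i=1-f_i\tau$, $i=1,\dots,m+n$, by \[f_i=\ln'\frac{\mathrm{Wr}(v_1,\dots,v_{\boldsymbol s_i^++1},u_1,\dots,u_{\boldsymbol s_i^-})}{\mathrm{Wr}(v_1,\dots,v_{\boldsymbol s_i^+},u_1,\dots,u_{\boldsymbol s_i^-})[1]}\ \text{ if } s_i=1,\qquad f_i=\ln'\frac{\mathrm{Wr}(v_1,\dots,v_{\boldsymbol s_i^+},u_1,\dots,u_{\boldsymbol s_i^-+1})}{\mathrm{Wr}(v_1,\dots,v_{\boldsymbol s_i^+},u_1,\dots,u_{\boldsymbol s_i^-})[1]}\ \text{ if } s_i=-1.\] Then $\mathcal R=d_1^{s_1}d_2^{s_2}\cdots d_{m+n}^{s_{m+n}}$ is a complete factorization of $\mathcal R$ with parity sequence $\boldsymbol s$.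
   Context: Fix $h\in\mathbb{C}^\times$. $\mathbb{K}=\mathbb{C}(x)$; for $f\in\mathbb{K}$, $f[i](x)=f(x-ih)$, and $\ln'(f)=f/f[1]$. $\mathbb{K}[\tau]$ is the ring of difference operators $\sum_{j=0}^ra_j\tau^j$ ($a_j\in\mathbb{K}$) with $\tau f=f[1]\tau$; order is the largest $j$ with $a_j\ne0$, monic means $a_r=1$, $a_0$ is the constant term. $\mathcal D$ of order $r$ is completely factorable over $\mathbb{K}$ if $\mathcal D=a_r(\tau-g_1)\cdots(\tau-g_r)$ with $g_i\in\mathbb{K}$. $\mathbb{K}(\tau)$ is the division ring of fractions of $\mathbb{K}[\tau]$. A fractional factorization of $\mathcal R\in\mathbb{K}(\tau)$ is $\mathcal R=\mathcal D_{\bar0}\mathcal D_{\bar1}^{-1}$ with $\mathcal D_{\bar0},\mathcal D_{\bar1}\in\mathbb{K}[\tau]$; it is minimal if $\mathcal D_{\bar1}$ is monic of minimal possible order. $\mathcal R$ is an $(m|n)$-rational difference operator if in its minimal fractional factorization $\mathcal D_{\bar0},\mathcal D_{\bar1}$ are completely factorable over $\mathbb{K}$, $\mathrm{ord}\,\mathcal D_{\bar0}=m$, $\mathrm{ord}\,\mathcal D_{\bar1}=n$, and they have the same nonzero constant term. Parity sequences: $S_{m|n}$ is the set of $\boldsymbol s\in\{\pm1\}^{m+n}$ with exactly $m$ entries $1$; $\boldsymbol s_i^+=\#\{j>i:s_j=1\}$, $\boldsymbol s_i^-=\#\{j<i:s_j=-1\}$. A complete factorization of $\mathcal R$ with parity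 sequence $\boldsymbol s$ is an equality $\mathcal R=d_1^{s_1}\cdots d_{m+n}^{s_{m+n}}$ with $d_i=1-f_i\tau$, $f_i\in\mathbb{K}$. Discrete Wronskian: $\mathrm{Wr}(g_1,\dots,g_r)=\det\big(g_j(x-(i-1)h)\big)_{i,j=1}^r$ (empty Wronskian $=1$). *)

theory Defs
  imports "HOL-Computational_Algebra.Polynomial"
          "HOL-Computational_Algebra.Normalized_Fraction"
          "HOL-Computational_Algebra.Polynomial_Factorial"
          "HOL-Computational_Algebra.Field_as_Ring"
          "Jordan_Normal_Form.Determinant"
begin

type_synonym K = "complex poly fract"

definition kconst :: "complex \<Rightarrow> K" where
  "kconst c = Fract [:c:] 1"

text \<open>Shift: for f in K, (shift h i f)(x) = f(x - i h), i.e. f[i].\<close>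
definition shift :: "complex \<Rightarrow> nat \<Rightarrow> K \<Rightarrow> K" where
  "shift h i f =
     (let pq = quot_of_fract f; s = [: - (of_nat i * h), 1 :]
      in Fract (pcompose (fst pq) s) (pcompose (snd pq) s))"

definition lnd :: "complex \<Rightarrow> K \<Rightarrow> K" where
  "lnd h f = f / shift h 1 f"

text \<open>Discrete Wronskian: Wr(g_1,...,g_r) = det (g_j(x-(i-1)h))_{i,j=1..r};
  the empty Wronskian is det of the 0x0 matrix, i.e. 1.\<close>
definition Wr :: "complex \<Rightarrow> K list \<Rightarrow> K" where
  "Wr h gs = det (mat (length gs) (length gs) (\<lambda>(i, j). shift h i (gs ! j)))"

text \<open>A (skew) power series sum_j a_j tau^j is its coefficient function nat => K.  The division ring of
  fractions K(tau) embeds in the skew Laurent series ring, and every operator with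
  nonzero constant term is a unit already in K[[tau]]; all identities below only
  involve such inverses.\<close>

definition sp_mult :: "complex \<Rightarrow> (nat \<Rightarrow> K) \<Rightarrow> (nat \<Rightarrow> K) \<Rightarrow> (nat \<Rightarrow> K)" where
  "sp_mult h a b = (\<lambda>n. \<Sum>i\<le>n. a i * shift h i (b (n - i)))"

definition sp_one :: "nat \<Rightarrow> K" where
  "sp_one = (\<lambda>n. if n = 0 then 1 else 0)"

definition sp_const :: "K \<Rightarrow> (nat \<Rightarrow> K)" where
  "sp_const a = (\<lambda>n. if n = 0 then a else 0)"

definition tau_minus :: "K \<Rightarrow> (nat \<Rightarrow> K)" where
  "tau_minus g = (\<lambda>n. if n = 0 then - g else if n = 1 then 1 else 0)"

definition one_minus_tau :: "K \<Rightarrow> (nat \<Rightarrow> K)" where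
  "one_minus_tau f = (\<lambda>n. if n = 0 then 1 else if n = 1 then - f else 0)"

text \<open>Inverse (for series with nonzero constant term, where it exists uniquely).\<close>
definition sp_inv :: "complex \<Rightarrow> (nat \<Rightarrow> K) \<Rightarrow> (nat \<Rightarrow> K)" where
  "sp_inv h a = (THE b. sp_mult h a b = sp_one)"

definition sp_prod :: "complex \<Rightarrow> (nat \<Rightarrow> K) list \<Rightarrow> (nat \<Rightarrow> K)" where
  "sp_prod h xs = foldr (sp_mult h) xs sp_one"

definition is_diff_op :: "(nat \<Rightarrow> K) \<Rightarrow> bool" where
  "is_diff_op D \<longleftrightarrow> finite {j. D j \<noteq> 0}"

definition op_ord :: "(nat \<Rightarrow> K) \<Rightarrow> nat" where
  "op_ord D = Max {j. D j \<noteq> 0}"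

definition op_apply :: "complex \<Rightarrow> (nat \<Rightarrow> K) \<Rightarrow> K \<Rightarrow> K" where
  "op_apply h D f = (\<Sum>j\<in>{j. D j \<noteq> 0}. D j * shift h j f)"

definition op_kernel :: "complex \<Rightarrow> (nat \<Rightarrow> K) \<Rightarrow> K set" where
  "op_kernel h D = {f. op_apply h D f = 0}"

definition completely_factorable :: "complex \<Rightarrow> (nat \<Rightarrow> K) \<Rightarrow> bool" where
  "completely_factorable h D \<longleftrightarrow>
     (\<exists>g :: nat \<Rightarrow> K. D = sp_mult h (sp_const (D (op_ord D)))
                          (sp_prod h (map (\<lambda>i. tau_minus (g i)) [1..<op_ord D + 1])))"

definition is_basis_of :: "(nat \<Rightarrow> K) \<Rightarrow> nat \<Rightarrow> K set \<Rightarrow> bool" where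
  "is_basis_of v k W \<longleftrightarrow>
     (\<forall>i\<in>{1..k}. v i \<in> W) \<and>
     (\<forall>c :: nat \<Rightarrow> complex. (\<Sum>i=1..k. kconst (c i) * v i) = 0 \<longrightarrow> (\<forall>i\<in>{1..k}. c i = 0)) \<and>
     (\<forall>f\<in>W. \<exists>c :: nat \<Rightarrow> complex. f = (\<Sum>i=1..k. kconst (c i) * v i))"

definition parity_seqs :: "nat \<Rightarrow> nat \<Rightarrow> (nat \<Rightarrow> int) set" where
  "parity_seqs m n = {s. (\<forall>i\<in>{1..m+n}. s i = 1 \<or> s i = -1) \<and>
                          (\<forall>i. i \<notin> {1..m+n} \<longrightarrow> s i = 0) \<and>
                          card {i\<in>{1..m+n}. s i = 1} = m}"

definition s_plus :: "nat \<Rightarrow> (nat \<Rightarrow> int) \<Rightarrow> nat \<Rightarrow> nat" where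
  "s_plus N s i = card {j\<in>{1..N}. i < j \<and> s j = 1}"

definition s_minus :: "nat \<Rightarrow> (nat \<Rightarrow> int) \<Rightarrow> nat \<Rightarrow> nat" where
  "s_minus N s i = card {j\<in>{1..N}. j < i \<and> s j = -1}"

definition Wr_vu :: "complex \<Rightarrow> (nat \<Rightarrow> K) \<Rightarrow> nat \<Rightarrow> (nat \<Rightarrow> K) \<Rightarrow> nat \<Rightarrow> K" where
  "Wr_vu h v a u b = Wr h (map v [1..<a+1] @ map u [1..<b+1])"

end

theory Submission
  imports Defs
begin

section \<open>Shift as a field homomorphism\<close>

definition lin :: "complex \<Rightarrow> nat \<Rightarrow> complex poly" where
  "lin h i = [: - (of_nat i * h), 1 :]"

lemma pcompose_const' [simp]: "pcompose [:c:] q = [:c:]"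
  by (simp add: pcompose_pCons)
declare pcompose_1 [simp]

lemma degree_lin [simp]: "degree (lin h i) = 1"
  by (simp add: lin_def)

lemma pcomp_lin_eq_0 [simp]: "pcompose p (lin h i) = 0 \<longleftrightarrow> p = 0"
  by (rule pcompose_eq_0_iff) simp

lemma shift_Fract:
  assumes "b \<noteq> 0"
  shows "shift h i (Fract a b) = Fract (pcompose a (lin h i)) (pcompose b (lin h i))"
proof -
  obtain p q where pq: "quot_of_fract (Fract a b) = (p, q)" by (cases "quot_of_fract (Fract a b)")
  have q0: "q \<noteq> 0" using snd_quot_of_fract_nonzero[of "Fract a b"] pq by simp
  have "Fract p q = Fract a b" using Fract_quot_of_fract[of "Fract a b"] pq by simp
  hence e: "p * b = a * q" using q0 assms by (simp add: eq_fract)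
  have "pcompose p (lin h i) * pcompose b (lin h i) = pcompose a (lin h i) * pcompose q (lin h i)"
    using arg_cong[OF e, of "\<lambda>x. pcompose x (lin h i)"] by (simp add: pcompose_mult)
  thus ?thesis unfolding shift_def Let_def pq using q0 assms
    by (simp add: eq_fract lin_def[symmetric])
qed

lemma shift_add: "shift h i (x + y) = shift h i x + shift h i y"
  by (cases x, cases y) (simp add: shift_Fract pcompose_add pcompose_mult)

lemma shift_mult: "shift h i (x * y) = shift h i x * shift h i y"
  by (cases x, cases y) (simp add: shift_Fract pcompose_mult)

lemma shift_one [simp]: "shift h i 1 = 1"
  by (simp add: One_fract_def shift_Fract pcompose_1)

lemma shift_zero [simp]: "shift h i 0 = 0"
  by (simp add: Zero_fract_def shift_Fract)

lemma shift_hom: "field_hom (shift h i)"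
  by unfold_locales (simp_all add: shift_add shift_mult)

interpretation shom: field_hom "shift h i" by (rule shift_hom)

lemma shift_shift: "shift h i (shift h j x) = shift h (i + j) x"
proof (cases x)
  case (Fract a b)
  have l: "pcompose (lin h j) (lin h i) = lin h (i + j)"
    by (simp add: lin_def pcompose_pCons algebra_simps)
  show ?thesis using Fract by (simp add: shift_Fract pcompose_assoc[symmetric] l)
qed

lemma shift_0 [simp]: "shift h 0 x = x"
  by (cases x) (simp add: shift_Fract lin_def)

lemma shift_eq_0_iff [simp]: "shift h i x = 0 \<longleftrightarrow> x = 0"
  by (cases x) (simp add: shift_Fract eq_fract Zero_fract_def)

lemma shift_kconst [simp]: "shift h i (kconst c) = kconst c"
  by (simp add: kconst_def shift_Fract)

lemma kconst_add: "kconst (a + b) = kconst a + kconst b"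
  by (simp add: kconst_def)
lemma kconst_mult: "kconst (a * b) = kconst a * kconst b"
  by (simp add: kconst_def mult.commute)
lemma kconst_0 [simp]: "kconst 0 = 0"
  by (simp add: kconst_def Zero_fract_def)
lemma kconst_1 [simp]: "kconst 1 = 1"
  by (simp add: kconst_def One_fract_def one_pCons)
lemma kconst_eq_0 [simp]: "kconst a = 0 \<longleftrightarrow> a = 0"
  by (simp add: kconst_def Zero_fract_def eq_fract)
lemma kconst_uminus: "kconst (- a) = - kconst a"
  by (simp add: kconst_def)

lemma poly_lin [simp]: "poly (lin h i) x = x - of_nat i * h"
  by (simp add: lin_def)

lemma periodic_poly_const:
  assumes h: "h \<noteq> 0" and r: "pcompose r (lin h 1) = r"
  shows "r = [:poly r 0:]"
proof (rule ccontr)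
  define r' where "r' = r - [:poly r 0:]"
  assume "r \<noteq> [:poly r 0:]"
  hence nz: "r' \<noteq> 0" by (simp add: r'_def)
  have per: "poly r' (x - h) = poly r' x" for x
  proof -
    have "poly r (x - h) = poly (pcompose r (lin h 1)) x" by (simp add: poly_pcompose)
    thus ?thesis using r by (simp add: r'_def)
  qed
  have roots: "poly r' (- (of_nat k * h)) = 0" for k
  proof (induction k)
    case 0 then show ?case by (simp add: r'_def)
  next
    case (Suc k)
    have "poly r' (- (of_nat (Suc k) * h)) = poly r' (- (of_nat k * h) - h)"
      by (rule arg_cong[where f="poly r'"]) (simp add: algebra_simps)
    also have "\<dots> = 0" using per Suc by simp
    finally show ?case .
  qed
  have fin: "finite {x. poly r' x = 0}" using poly_roots_finite[OF nz] .
  have "inj (\<lambda>k::nat. - (of_nat k * h))" using h by (auto simp: inj_def)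
  hence "infinite (range (\<lambda>k::nat. - (of_nat k * h)))"
    using finite_imageD by blast
  moreover have "range (\<lambda>k::nat. - (of_nat k * h)) \<subseteq> {x. poly r' x = 0}" using roots by auto
  ultimately show False using fin finite_subset by blast
qed

lemma periodic_const:
  assumes h: "h \<noteq> 0" and f: "shift h 1 f = f"
  shows "\<exists>c. f = kconst c"
proof -
  obtain p q where pq: "quot_of_fract f = (p, q)" by (cases "quot_of_fract f")
  have q0: "q \<noteq> 0" using snd_quot_of_fract_nonzero[of f] pq by simp
  have fpq: "f = Fract p q" using Fract_quot_of_fract[of f] pq by simp
  have cop: "coprime p q" using coprime_quot_of_fract[of f] pq by simp
  let ?l = "lin h 1"
  have "Fract (pcompose p ?l) (pcompose q ?l) = Fract p q" using f fpq q0 by (simp add: shift_Fract)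
  hence e: "pcompose p ?l * q = p * pcompose q ?l" using q0 by (simp add: eq_fract)
  have "q dvd p * pcompose q ?l" using e by (metis dvd_triv_right)
  hence "q dvd pcompose q ?l" using cop by (metis coprime_commute coprime_dvd_mult_right_iff)
  then obtain k where k: "pcompose q ?l = q * k" by (auto simp: dvd_def)
  have dq: "degree (pcompose q ?l) = degree q" by (simp add: degree_pcompose)
  have k0: "k \<noteq> 0" using k q0 by auto
  have "degree k = 0" using k dq q0 k0 by (simp add: degree_mult_eq)
  then obtain \<kappa> where kk: "k = [:\<kappa>:]" by (metis degree_eq_zeroE)
  have "lead_coeff (pcompose q ?l) = lead_coeff q"
    by (simp add: lead_coeff_comp lin_def)
  hence "lead_coeff (q * [:\<kappa>:]) = lead_coeff q" using k kk by simp
  hence "lead_coeff q * \<kappa> = lead_coeff q" by (simp only: lead_coeff_mult) simp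
  hence "\<kappa> = 1" using q0 k0 kk by auto
  hence ql: "pcompose q ?l = q" using k kk by simp
  hence qc: "q = [:poly q 0:]" using periodic_poly_const[OF h] by blast
  have "pcompose p ?l = p" using e ql q0 by simp
  hence pc: "p = [:poly p 0:]" using periodic_poly_const[OF h] by blast
  have c0: "poly q 0 \<noteq> 0" using qc q0 by (metis pCons_0_0)
  have "Fract [:poly p 0:] [:poly q 0:] = Fract [:poly p 0 / poly q 0:] 1"
    using c0 by (subst eq_fract) auto
  hence "f = kconst (poly p 0 / poly q 0)"
    unfolding kconst_def using fpq pc qc by metis
  thus ?thesis by blast
qed

section \<open>Skew power series\<close>

lemma sum_pairs_le: "(\<Sum>(i,j)\<in>{(i,j). i + j \<le> (n::nat)}. g i j) = (\<Sum>i\<le>n. \<Sum>j\<le>n - i. g i j)"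
proof -
  have "{(i,j). i + j \<le> n} = Sigma {..n} (\<lambda>i. {..n - i})" by auto
  thus ?thesis by (simp add: sum.Sigma)
qed

lemma sp_mult_assoc: "sp_mult h (sp_mult h a b) c = sp_mult h a (sp_mult h b c)"
proof
  fix n
  define g where "g = (\<lambda>j l. a j * shift h j (b l) * shift h (j + l) (c (n - (j + l))))"
  have "sp_mult h (sp_mult h a b) c n =
        (\<Sum>k\<le>n. \<Sum>j\<le>k. g j (k - j))"
    unfolding sp_mult_def g_def
    by (intro sum.cong refl) (simp add: sum_distrib_right)
  also have "\<dots> = (\<Sum>(j,l)\<in>{(j,l). j + l \<le> n}. g j l)"
    by (rule sum.triangle_reindex_eq[symmetric])
  also have "\<dots> = (\<Sum>j\<le>n. \<Sum>l\<le>n - j. g j l)" by (rule sum_pairs_le)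
  also have "\<dots> = sp_mult h a (sp_mult h b c) n"
    unfolding sp_mult_def g_def
    by (intro sum.cong refl)
       (simp add: shom.hom_sum shom.hom_mult shift_shift sum_distrib_left mult.assoc diff_diff_add)
  finally show "sp_mult h (sp_mult h a b) c n = sp_mult h a (sp_mult h b c) n" .
qed

lemma sp_mult_one_left [simp]: "sp_mult h sp_one a = a"
proof
  fix n
  have "sp_mult h sp_one a n = (\<Sum>i\<le>n. if i = 0 then a n else 0)"
    unfolding sp_mult_def sp_one_def by (intro sum.cong refl) auto
  thus "sp_mult h sp_one a n = a n" by simp
qed

lemma sp_mult_one_right [simp]: "sp_mult h a sp_one = a"
proof
  fix n
  have "sp_mult h a sp_one n = (\<Sum>i\<le>n. if i = n then a n else 0)"
    unfolding sp_mult_def sp_one_def by (intro sum.cong refl) auto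
  thus "sp_mult h a sp_one n = a n" by simp
qed

lemma sp_mult_0: "sp_mult h a b 0 = a 0 * b 0"
  by (simp add: sp_mult_def)

lemma sp_mult_Suc: "sp_mult h a b (Suc n) = a 0 * b (Suc n) + (\<Sum>i\<in>{1..Suc n}. a i * shift h i (b (Suc n - i)))"
proof -
  have "{..Suc n} = insert 0 {1..Suc n}" by auto
  thus ?thesis unfolding sp_mult_def by simp
qed

fun rinv :: "complex \<Rightarrow> (nat \<Rightarrow> K) \<Rightarrow> nat \<Rightarrow> K" where
  "rinv h a n = (sp_one n - (\<Sum>i\<in>{1..n}. a i * shift h i (if 0 < i \<and> i \<le> n then rinv h a (n - i) else 0))) / a 0"

declare rinv.simps [simp del]

lemma rinv_eq:
  assumes "a 0 \<noteq> 0"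
  shows "a 0 * rinv h a n = sp_one n - (\<Sum>i\<in>{1..n}. a i * shift h i (rinv h a (n - i)))"
proof -
  have r: "rinv h a n = (sp_one n - (\<Sum>i\<in>{1..n}. a i * shift h i (if 0 < i \<and> i \<le> n then rinv h a (n - i) else 0))) / a 0"
    by (rule rinv.simps)
  have e: "(\<Sum>i\<in>{1..n}. a i * shift h i (if 0 < i \<and> i \<le> n then rinv h a (n - i) else 0))
           = (\<Sum>i\<in>{1..n}. a i * shift h i (rinv h a (n - i)))"
    by (intro sum.cong refl) auto
  show ?thesis unfolding r e using assms by simp
qed

lemma rinv_right:
  assumes "a 0 \<noteq> 0"
  shows "sp_mult h a (rinv h a) = sp_one"
proof
  fix n :: nat
  have "{..n} = insert 0 {1..n}" by (auto simp: not_less_eq_eq)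
  hence "sp_mult h a (rinv h a) n = a 0 * rinv h a n + (\<Sum>i\<in>{1..n}. a i * shift h i (rinv h a (n - i)))"
    unfolding sp_mult_def by simp
  thus "sp_mult h a (rinv h a) n = sp_one n" using rinv_eq[of a h n, OF assms] by simp
qed

lemma sp_inv:
  assumes "a 0 \<noteq> 0"
  shows "sp_mult h a (sp_inv h a) = sp_one" "sp_mult h (sp_inv h a) a = sp_one"
proof -
  define b where "b = rinv h a"
  have ab: "sp_mult h a b = sp_one" using rinv_right[of a h, OF assms] b_def by simp
  have "a 0 * b 0 = 1" using arg_cong[OF ab, of "\<lambda>f. f 0"] by (simp add: sp_mult_0 sp_one_def)
  hence b0: "b 0 \<noteq> 0" by auto
  define b' where "b' = rinv h b"
  have bb: "sp_mult h b b' = sp_one" using rinv_right[of b h, OF b0] b'_def by simp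
  have "sp_mult h (sp_mult h a b) b' = a" using bb by (simp add: sp_mult_assoc)
  hence "a = b'" using ab by simp
  hence ba: "sp_mult h b a = sp_one" using bb by simp
  have uniq: "c = b" if "sp_mult h a c = sp_one" for c
  proof -
    have "c = sp_mult h (sp_mult h b a) c" using ba by simp
    also have "\<dots> = b" by (simp add: sp_mult_assoc that)
    finally show ?thesis .
  qed
  have "sp_inv h a = b" unfolding sp_inv_def
    by (rule the_equality, rule ab, erule uniq)
  thus "sp_mult h a (sp_inv h a) = sp_one" "sp_mult h (sp_inv h a) a = sp_one"
    using ab ba by simp_all
qed

lemma sp_inv_0: "a 0 \<noteq> 0 \<Longrightarrow> sp_inv h a 0 \<noteq> 0"
  using arg_cong[OF sp_inv(1)[of a h], of "\<lambda>f. f 0"] by (auto simp: sp_mult_0 sp_one_def)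

lemma sp_cancel_left:
  assumes "a 0 \<noteq> 0" shows "sp_mult h (sp_inv h a) (sp_mult h a x) = x"
  by (simp add: sp_mult_assoc[symmetric] sp_inv[of a h, OF assms])

lemma sp_cancel_right:
  assumes "a 0 \<noteq> 0" shows "sp_mult h (sp_mult h x (sp_inv h a)) a = x"
  by (simp add: sp_mult_assoc sp_inv[of a h, OF assms])

lemma sp_inv_unique:
  assumes "a 0 \<noteq> 0" "sp_mult h a b = sp_one" shows "sp_inv h a = b"
proof -
  have "sp_inv h a = sp_mult h (sp_inv h a) (sp_mult h a b)" using assms by simp
  also have "\<dots> = b" by (rule sp_cancel_left[of a h, OF assms(1)])
  finally show ?thesis .
qed

lemma sp_inv_mult:
  assumes "a 0 \<noteq> 0" "b 0 \<noteq> 0"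
  shows "sp_inv h (sp_mult h a b) = sp_mult h (sp_inv h b) (sp_inv h a)"
proof (rule sp_inv_unique)
  show "sp_mult h a b 0 \<noteq> 0" using assms by (simp add: sp_mult_0)
  have "sp_mult h (sp_mult h a b) (sp_mult h (sp_inv h b) (sp_inv h a))
      = sp_mult h a (sp_mult h (sp_mult h b (sp_inv h b)) (sp_inv h a))"
    by (simp add: sp_mult_assoc)
  also have "\<dots> = sp_one" using assms by (simp add: sp_inv)
  finally show "sp_mult h (sp_mult h a b) (sp_mult h (sp_inv h b) (sp_inv h a)) = sp_one" .
qed

lemma sp_prod_Cons [simp]: "sp_prod h (x # xs) = sp_mult h x (sp_prod h xs)"
  by (simp add: sp_prod_def)

lemma sp_prod_Nil [simp]: "sp_prod h [] = sp_one"
  by (simp add: sp_prod_def)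

lemma sp_prod_append: "sp_prod h (xs @ ys) = sp_mult h (sp_prod h xs) (sp_prod h ys)"
  by (induction xs) (simp_all add: sp_mult_assoc)

definition bnd :: "nat \<Rightarrow> (nat \<Rightarrow> K) \<Rightarrow> bool" where
  "bnd k D \<longleftrightarrow> (\<forall>j>k. D j = 0)"

lemma bnd_diff_op: "bnd k D \<Longrightarrow> is_diff_op D"
  unfolding bnd_def is_diff_op_def
  by (rule finite_subset[of _ "{..k}"]) (auto simp: not_le[symmetric])

lemma bnd_mono: "bnd k D \<Longrightarrow> k \<le> k' \<Longrightarrow> bnd k' D"
  unfolding bnd_def by auto

lemma op_apply_bnd:
  assumes "bnd k D"
  shows "op_apply h D f = (\<Sum>j\<le>k. D j * shift h j f)"
  unfolding op_apply_def
proof (rule sum.mono_neutral_left)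
  show "{j. D j \<noteq> 0} \<subseteq> {..k}" using assms unfolding bnd_def by (auto simp: not_le[symmetric])
qed auto

lemma op_apply_zero [simp]: "op_apply h D 0 = 0"
  by (simp add: op_apply_def)

lemma op_apply_add: "op_apply h D (x + y) = op_apply h D x + op_apply h D y"
  by (simp add: op_apply_def shom.hom_add distrib_left sum.distrib)

lemma op_apply_kconst: "op_apply h D (kconst c * x) = kconst c * op_apply h D x"
  by (simp add: op_apply_def shom.hom_mult sum_distrib_left mult_ac)

lemma op_apply_uminus: "op_apply h D (- x) = - op_apply h D x"
  by (simp add: op_apply_def shom.hom_uminus sum_negf)

lemma op_apply_sum: "op_apply h D (\<Sum>i\<in>A. g i) = (\<Sum>i\<in>A. op_apply h D (g i))"
  by (induction A rule: infinite_finite_induct) (simp_all add: op_apply_add)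

lemma bnd_sp_mult:
  assumes "bnd k1 a" "bnd k2 b"
  shows "bnd (k1 + k2) (sp_mult h a b)"
  unfolding bnd_def
proof (intro allI impI)
  fix n assume n: "n > k1 + k2"
  have "a i * shift h i (b (n - i)) = 0" for i
    using assms n unfolding bnd_def by (cases "i > k1") auto
  thus "sp_mult h a b n = 0" unfolding sp_mult_def by (intro sum.neutral) simp
qed

lemma bnd_omt: "bnd 1 (one_minus_tau f)"
  by (simp add: bnd_def one_minus_tau_def)

lemma bnd_sp_one: "bnd 0 sp_one"
  by (simp add: bnd_def sp_one_def)

lemma op_apply_mult:
  assumes A: "bnd k1 A" and B: "bnd k2 B"
  shows "op_apply h (sp_mult h A B) f = op_apply h A (op_apply h B f)"
proof -
  define g where "g = (\<lambda>i j. A i * shift h i (B j) * shift h (i + j) f)"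
  have "op_apply h (sp_mult h A B) f = (\<Sum>n\<le>k1+k2. sp_mult h A B n * shift h n f)"
    by (rule op_apply_bnd[OF bnd_sp_mult[OF A B]])
  also have "\<dots> = (\<Sum>n\<le>k1+k2. \<Sum>i\<le>n. g i (n - i))"
    unfolding sp_mult_def g_def by (intro sum.cong refl) (simp add: sum_distrib_right)
  also have "\<dots> = (\<Sum>(i,j)\<in>{(i,j). i + j \<le> k1+k2}. g i j)"
    by (rule sum.triangle_reindex_eq[symmetric])
  also have "\<dots> = (\<Sum>(i,j)\<in>{..k1} \<times> {..k2}. g i j)"
  proof (rule sum.mono_neutral_right)
    show "finite {(i,j). i + j \<le> k1 + k2}"
      by (rule finite_subset[of _ "{..k1+k2} \<times> {..k1+k2}"]) auto
    show "{..k1} \<times> {..k2} \<subseteq> {(i,j). i + j \<le> k1 + k2}" by auto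
    show "\<forall>x\<in>{(i, j). i + j \<le> k1 + k2} - {..k1} \<times> {..k2}. (case x of (i, j) \<Rightarrow> g i j) = 0"
      using A B unfolding bnd_def g_def by (auto simp: not_le) (meson not_le)+
  qed
  also have "\<dots> = (\<Sum>i\<le>k1. \<Sum>j\<le>k2. g i j)" by (simp add: sum.cartesian_product)
  also have "\<dots> = op_apply h A (op_apply h B f)"
    unfolding op_apply_bnd[OF A] op_apply_bnd[OF B] g_def
    by (simp add: shom.hom_sum shom.hom_mult shift_shift sum_distrib_left mult.assoc)
  finally show ?thesis .
qed

lemma op_apply_omt:
  "op_apply h (one_minus_tau g) y = y - g * shift h 1 y"
proof -
  have "{..1::nat} = {0, 1}" by auto
  thus ?thesis unfolding op_apply_bnd[OF bnd_omt] by (simp add: one_minus_tau_def)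
qed

lemma bnd_op_ord:
  assumes "is_diff_op D" shows "bnd (op_ord D) D"
  using assms unfolding bnd_def is_diff_op_def op_ord_def
  by (metis (mono_tags, lifting) Max_ge mem_Collect_eq not_le)

lemma op_ord_less:
  assumes "\<And>j. j \<ge> k \<Longrightarrow> P j = 0" "P 0 \<noteq> 0"
  shows "op_ord P < k"
proof -
  have fin: "finite {j. P j \<noteq> 0}"
    by (rule finite_subset[of _ "{..<k}"]) (use assms in \<open>auto simp: not_less[symmetric]\<close>)
  have ne: "{j. P j \<noteq> 0} \<noteq> {}" using assms by auto
  have "op_ord P \<in> {j. P j \<noteq> 0}" unfolding op_ord_def using Max_in[OF fin ne] .
  thus ?thesis using assms(1) by (metis mem_Collect_eq not_less)
qed


section \<open>Right factor and the minimality contradiction\<close>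

lemma right_factor:
  assumes D: "bnd k D" and D0: "D 0 = 1" and Dw: "op_apply h D w = 0" and w: "w \<noteq> 0"
  shows "\<exists>P. (\<forall>j\<ge>k. P j = 0) \<and> P 0 = 1 \<and> D = sp_mult h P (one_minus_tau (w / shift h 1 w))"
proof -
  define S where "S = (\<lambda>n. \<Sum>j\<le>n. D j * shift h j w)"
  define P where "P = (\<lambda>n. S n / shift h n w)"
  have Sk: "S n = 0" if "n \<ge> k" for n
  proof -
    have "S n = (\<Sum>j\<le>k. D j * shift h j w)" unfolding S_def
      by (rule sum.mono_neutral_right) (use that D in \<open>auto simp: bnd_def\<close>)
    thus ?thesis using Dw op_apply_bnd[OF D] by simp
  qed
  have P0: "P 0 = 1" using w D0 by (simp add: P_def S_def)
  have Pk: "\<forall>j\<ge>k. P j = 0" using Sk by (simp add: P_def)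
  let ?g = "w / shift h 1 w"
  have "D = sp_mult h P (one_minus_tau ?g)"
  proof
    fix n :: nat
    show "D n = sp_mult h P (one_minus_tau ?g) n"
    proof (cases n)
      case 0 then show ?thesis using P0 D0 by (simp add: sp_mult_0 one_minus_tau_def)
    next
      case (Suc m)
      have z: "(\<Sum>i<m. P i * shift h i (one_minus_tau ?g (Suc m - i))) = 0"
        by (intro sum.neutral) (auto simp: one_minus_tau_def)
      have "sp_mult h P (one_minus_tau ?g) (Suc m) =
          P m * shift h m (- ?g) + P (Suc m)"
        unfolding sp_mult_def atMost_Suc lessThan_Suc_atMost[symmetric]
        by (simp add: sum.insert z one_minus_tau_def Suc_diff_le)
      also have "\<dots> = (S (Suc m) - S m) / shift h (Suc m) w"
        using w by (simp add: P_def shom.hom_uminus shom.hom_div shift_shift field_simps)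
      also have "\<dots> = D (Suc m)"
        using w by (simp add: S_def)
      finally show ?thesis using Suc by simp
    qed
  qed
  thus ?thesis using P0 Pk by blast
qed

lemma omt_0 [simp]: "one_minus_tau f 0 = 1"
  by (simp add: one_minus_tau_def)

lemma no_common_kernel:
  assumes D0b: "bnd m D0" and D1b: "bnd n D1" and c0: "D0 0 = 1" and c1: "D1 0 = 1"
    and minimal: "\<And>E0 E1. is_diff_op E0 \<Longrightarrow> is_diff_op E1 \<Longrightarrow> E1 \<noteq> (\<lambda>_. 0) \<Longrightarrow>
                     sp_mult h (sp_mult h D0 (sp_inv h D1)) E1 = E0 \<Longrightarrow> n \<le> op_ord E1"
    and w0: "op_apply h D0 w = 0" and w1: "op_apply h D1 w = 0" and w: "w \<noteq> 0"
  shows False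
proof -
  let ?d = "one_minus_tau (w / shift h 1 w)"
  obtain Q where Q: "\<forall>j\<ge>m. Q j = 0" "Q 0 = 1" "D0 = sp_mult h Q ?d"
    using right_factor[OF D0b c0 w0 w] by blast
  obtain P where P: "\<forall>j\<ge>n. P j = 0" "P 0 = 1" "D1 = sp_mult h P ?d"
    using right_factor[OF D1b c1 w1 w] by blast
  have d0: "?d 0 \<noteq> 0" by simp
  have P0: "P 0 \<noteq> 0" using P by simp
  have "sp_mult h (sp_mult h D0 (sp_inv h D1)) P =
        sp_mult h (sp_mult h Q (sp_mult h ?d (sp_inv h ?d))) (sp_mult h (sp_inv h P) P)"
    unfolding Q(3) P(3) sp_inv_mult[of P ?d h, OF P0 d0] by (simp add: sp_mult_assoc)
  also have "\<dots> = Q" using sp_inv[of ?d h, OF d0] sp_inv[of P h, OF P0] by simp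
  finally have RP: "sp_mult h (sp_mult h D0 (sp_inv h D1)) P = Q" .
  have bQ: "bnd m Q" using Q(1) by (simp add: bnd_def)
  have bP: "bnd n P" using P(1) by (simp add: bnd_def)
  have "n \<le> op_ord P"
    by (rule minimal[OF bnd_diff_op[OF bQ] bnd_diff_op[OF bP] _ RP]) (use P(2) in \<open>auto dest: fun_cong[of _ _ 0]\<close>)
  moreover have "op_ord P < n" by (rule op_ord_less) (use P in auto)
  ultimately show False by simp
qed

definition Wmat :: "complex \<Rightarrow> K list \<Rightarrow> K mat" where
  "Wmat h gs = mat (length gs) (length gs) (\<lambda>(i, j). shift h i (gs ! j))"

lemma Wr_Wmat: "Wr h gs = det (Wmat h gs)"
  by (simp add: Wr_def Wmat_def)

lemma Wmat_carrier: "Wmat h gs \<in> carrier_mat (length gs) (length gs)"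
  by (simp add: Wmat_def)

lemma Wmat_index [simp]: "i < length gs \<Longrightarrow> j < length gs \<Longrightarrow> Wmat h gs $$ (i, j) = shift h i (gs ! j)"
  by (simp add: Wmat_def)

lemma Wmat_dim [simp]: "dim_row (Wmat h gs) = length gs" "dim_col (Wmat h gs) = length gs"
  by (simp_all add: Wmat_def)

definition ins :: "nat \<Rightarrow> 'a \<Rightarrow> 'a list \<Rightarrow> 'a list" where
  "ins p y ws = take p ws @ y # drop p ws"

lemma length_ins [simp]: "p \<le> length ws \<Longrightarrow> length (ins p y ws) = Suc (length ws)"
  by (simp add: ins_def)

lemma nth_ins: "p \<le> length ws \<Longrightarrow> q \<le> length ws \<Longrightarrow>
   ins p y ws ! q = (if q < p then ws ! q else if q = p then y else ws ! (q - 1))"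
  by (auto simp: ins_def nth_append min_def nth_Cons' not_less)

lemma set_ins: "p \<le> length ws \<Longrightarrow> set (ins p y ws) = insert y (set ws)"
proof -
  have "set ws = set (take p ws @ drop p ws)" by (simp only: append_take_drop_id)
  thus ?thesis unfolding ins_def by (simp only: set_append set_simps) blast
qed

definition Lc :: "complex \<Rightarrow> nat \<Rightarrow> K list \<Rightarrow> nat \<Rightarrow> K" where
  "Lc h p ws j = (if j \<le> length ws then (-1)^p * cofactor (Wmat h (ins p 0 ws)) j p / shift h 1 (Wr h ws) else 0)"

lemma bnd_Lc: "bnd (length ws) (Lc h p ws)"
  by (simp add: bnd_def Lc_def)

lemma mat_delete_ins:
  assumes p: "p \<le> length ws"
  shows "mat_delete (Wmat h (ins p y ws)) j p = mat_delete (Wmat h (ins p z ws)) j p"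
proof (rule eq_matI)
  fix i' j' assume i': "i' < dim_row (mat_delete (Wmat h (ins p z ws)) j p)"
    and j': "j' < dim_col (mat_delete (Wmat h (ins p z ws)) j p)"
  have i'': "i' < length ws" "j' < length ws" using i' j' p by auto
  show "mat_delete (Wmat h (ins p y ws)) j p $$ (i', j') = mat_delete (Wmat h (ins p z ws)) j p $$ (i', j')"
    using i'' p by (simp add: mat_delete_def nth_ins)
qed (use p in auto)

lemma cofactor_ins:
  assumes p: "p \<le> length ws"
  shows "cofactor (Wmat h (ins p y ws)) j p = cofactor (Wmat h (ins p 0 ws)) j p"
  unfolding cofactor_def using mat_delete_ins[OF p] by metis

lemma Lc_apply:
  assumes p: "p \<le> length ws"
  shows "op_apply h (Lc h p ws) y = (-1)^p * Wr h (ins p y ws) / shift h 1 (Wr h ws)"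
proof -
  let ?k = "length ws"
  let ?A = "Wmat h (ins p y ws)"
  have A: "?A \<in> carrier_mat (Suc ?k) (Suc ?k)" using Wmat_carrier[of h "ins p y ws"] p by simp
  have "Wr h (ins p y ws) = (\<Sum>i<Suc ?k. ?A $$ (i, p) * cofactor ?A i p)"
    unfolding Wr_Wmat by (rule laplace_expansion_column[OF A]) (use p in simp)
  also have "\<dots> = (\<Sum>i\<le>?k. shift h i y * cofactor (Wmat h (ins p 0 ws)) i p)"
    using p by (intro sum.cong) (auto simp: nth_ins cofactor_ins[OF p, where y=y] lessThan_Suc_atMost)
  finally have W: "Wr h (ins p y ws) = (\<Sum>i\<le>?k. shift h i y * cofactor (Wmat h (ins p 0 ws)) i p)" .
  have "op_apply h (Lc h p ws) y = (\<Sum>j\<le>?k. Lc h p ws j * shift h j y)"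
    by (rule op_apply_bnd[OF bnd_Lc])
  also have "\<dots> = (\<Sum>j\<le>?k. (-1)^p * (shift h j y * cofactor (Wmat h (ins p 0 ws)) j p) / shift h 1 (Wr h ws))"
    by (intro sum.cong refl) (simp add: Lc_def)
  also have "\<dots> = (-1)^p * Wr h (ins p y ws) / shift h 1 (Wr h ws)"
    unfolding W by (simp add: sum_divide_distrib sum_distrib_left)
  finally show ?thesis .
qed

lemma mat_delete_ins_0:
  assumes p: "p \<le> length ws"
  shows "mat_delete (Wmat h (ins p y ws)) 0 p = map_mat (shift h 1) (Wmat h ws)"
proof (rule eq_matI)
  fix i' j' assume i': "i' < dim_row (map_mat (shift h 1) (Wmat h ws))"
    and j': "j' < dim_col (map_mat (shift h 1) (Wmat h ws))"
  have i'': "i' < length ws" "j' < length ws" using i' j' by auto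
  show "mat_delete (Wmat h (ins p y ws)) 0 p $$ (i', j') = map_mat (shift h 1) (Wmat h ws) $$ (i', j')"
    using i'' p by (simp add: mat_delete_def nth_ins shift_shift)
qed (use p in auto)

lemma Lc_0:
  assumes p: "p \<le> length ws" and W: "Wr h ws \<noteq> 0"
  shows "Lc h p ws 0 = 1"
proof -
  have "cofactor (Wmat h (ins p 0 ws)) 0 p = (-1)^p * shift h 1 (Wr h ws)"
    unfolding cofactor_def mat_delete_ins_0[OF p] Wr_Wmat by simp
  moreover have "((-1::K)^p) * (-1)^p = 1" by (simp flip: power_add)
  ultimately show ?thesis using W by (simp add: Lc_def mult.assoc[symmetric])
qed

lemma Wr_ins_member:
  assumes p: "p \<le> length ws" and x: "x \<in> set ws"
  shows "Wr h (ins p x ws) = 0"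
proof -
  obtain q where q: "q < length ws" "ws ! q = x" using x by (auto simp: in_set_conv_nth)
  define q' where "q' = (if q < p then q else Suc q)"
  have q'1: "q' \<noteq> p" "q' < Suc (length ws)" using q by (auto simp: q'_def)
  have e: "ins p x ws ! q' = x" using q p by (auto simp: q'_def nth_ins)
  show ?thesis unfolding Wr_Wmat
  proof (rule det_identical_columns[OF Wmat_carrier q'1(1)])
    show "q' < length (ins p x ws)" "p < length (ins p x ws)" using q'1 p by auto
    show "col (Wmat h (ins p x ws)) q' = col (Wmat h (ins p x ws)) p"
      using q'1 p e by (intro eq_vecI) (auto simp: nth_ins)
  qed
qed

lemma Lc_kills:
  assumes p: "p \<le> length ws" and x: "x \<in> set ws"
  shows "op_apply h (Lc h p ws) x = 0"
  using Lc_apply[OF p] Wr_ins_member[OF p x] by simp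


section \<open>Uniqueness of normalized operators with a given kernel\<close>

lemma L_unique:
  assumes W: "Wr h ws \<noteq> 0" and k: "length ws = k"
    and D: "bnd k D" and E: "bnd k E" and DE0: "D 0 = E 0"
    and kD: "\<forall>x\<in>set ws. op_apply h D x = 0" and kE: "\<forall>x\<in>set ws. op_apply h E x = 0"
  shows "D = E"
proof -
  define c where "c = vec k (\<lambda>j. D (Suc j) - E (Suc j))"
  define M where "M = transpose_mat (map_mat (shift h 1) (Wmat h ws))"
  have Mc: "M \<in> carrier_mat k k" using k Wmat_carrier[of h ws] by (simp add: M_def)
  have mc: "map_mat (shift h 1) (Wmat h ws) \<in> carrier_mat k k" using k Wmat_carrier[of h ws] by simp
  have detM: "det M \<noteq> 0"
    unfolding M_def det_transpose[OF mc] shom.hom_det using W by (simp add: Wr_Wmat)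
  have rel: "(\<Sum>j<k. shift h (Suc j) (ws ! i) * c $ j) = 0" if i: "i < k" for i
  proof -
    have x: "ws ! i \<in> set ws" using i k by simp
    have "0 = op_apply h D (ws ! i) - op_apply h E (ws ! i)" using kD kE x by simp
    also have "\<dots> = (\<Sum>j\<le>k. (D j - E j) * shift h j (ws ! i))"
      unfolding op_apply_bnd[OF D] op_apply_bnd[OF E] by (simp add: sum_subtractf left_diff_distrib)
    also have "\<dots> = (\<Sum>j<k. (D (Suc j) - E (Suc j)) * shift h (Suc j) (ws ! i))"
      by (subst sum.atMost_shift) (simp add: DE0)
    also have "\<dots> = (\<Sum>j<k. shift h (Suc j) (ws ! i) * c $ j)"
      by (intro sum.cong refl) (simp add: c_def)
    finally show ?thesis by simp
  qed
  have cc: "c \<in> carrier_vec k" by (simp add: c_def)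
  have Mc0: "M *\<^sub>v c = 0\<^sub>v k"
  proof (rule eq_vecI)
    fix i assume "i < dim_vec (0\<^sub>v k :: K vec)"
    hence i: "i < k" by simp
    have "(M *\<^sub>v c) $ i = (\<Sum>j<k. shift h (Suc j) (ws ! i) * c $ j)"
      using i k Mc unfolding M_def
      by (simp add: scalar_prod_def c_def shift_shift atLeast0LessThan)
    thus "(M *\<^sub>v c) $ i = 0\<^sub>v k $ i" using rel[OF i] i by simp
  qed (use Mc in simp)
  have c0: "c = 0\<^sub>v k" using det_0_iff_vec_prod_zero_field[OF Mc] detM cc Mc0 by blast
  show "D = E"
  proof
    fix j
    show "D j = E j"
    proof (cases "j = 0")
      case True then show ?thesis using DE0 by simp
    next
      case False
      then obtain j' where j': "j = Suc j'" by (cases j) auto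
      show ?thesis
      proof (cases "j' < k")
        case True
        have "c $ j' = 0" using c0 True by simp
        thus ?thesis using True j' by (simp add: c_def)
      next
        case False
        thus ?thesis using D E j' by (simp add: bnd_def)
      qed
    qed
  qed
qed

section \<open>Casoratian of independent functions\<close>

definition indep :: "K list \<Rightarrow> bool" where
  "indep ws \<longleftrightarrow> (\<forall>c. (\<Sum>j<length ws. kconst (c j) * ws ! j) = 0 \<longrightarrow> (\<forall>j<length ws. c j = 0))"

lemma sum_lessThan_add: fixes a b :: nat shows "(\<Sum>j<a+b. F j) = (\<Sum>j<a. F j) + (\<Sum>j<b. F (a + j))"
  by (induction b) (simp_all add: add.assoc)

lemma sum_append_split:
  "(\<Sum>j<length (xs @ ys). g j ((xs @ ys) ! j)) = (\<Sum>j<length xs. g j (xs ! j)) + (\<Sum>j<length ys. g (length xs + j) (ys ! j))"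
  by (simp add: sum_lessThan_add nth_append)

lemma indep_drop_middle:
  assumes "indep (xs @ ys @ zs)" shows "indep (xs @ zs)"
  unfolding indep_def
proof (rule allI, rule impI)
  fix c :: "nat \<Rightarrow> complex"
  assume c: "(\<Sum>j<length (xs @ zs). kconst (c j) * (xs @ zs) ! j) = 0"
  define c' where "c' = (\<lambda>j. if j < length xs then c j else if j < length xs + length ys then 0
                          else c (j - length ys))"
  have "(\<Sum>j<length (xs @ ys @ zs). kconst (c' j) * (xs @ ys @ zs) ! j) =
        (\<Sum>j<length xs. kconst (c' j) * xs ! j) + ((\<Sum>j<length ys. kconst (c' (length xs + j)) * ys ! j)
          + (\<Sum>j<length zs. kconst (c' (length xs + (length ys + j))) * zs ! j))"
    by (simp add: sum_lessThan_add nth_append)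
  also have "\<dots> = (\<Sum>j<length xs. kconst (c j) * xs ! j) + (\<Sum>j<length zs. kconst (c (length xs + j)) * zs ! j)"
    by (simp add: c'_def)
  also have "\<dots> = 0" using c by (simp add: sum_lessThan_add nth_append)
  finally have all: "\<forall>j<length (xs @ ys @ zs). c' j = 0" using assms unfolding indep_def by blast
  show "\<forall>j<length (xs @ zs). c j = 0"
  proof (intro allI impI)
    fix j assume j: "j < length (xs @ zs)"
    show "c j = 0"
    proof (cases "j < length xs")
      case True thus ?thesis using all[rule_format, of j] by (simp add: c'_def)
    next
      case False
      thus ?thesis using all[rule_format, of "j + length ys"] j by (simp add: c'_def)
    qed
  qed
qed

lemma indep_prefix: "indep (xs @ ys) \<Longrightarrow> indep xs"
  using indep_drop_middle[of xs ys "[]"] by simp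


lemma Wr_Nil: "Wr h [] = 1"
  by (simp add: Wr_def det_def)

lemma Cas_nonzero:
  assumes h: "h \<noteq> 0"
  shows "indep ws \<Longrightarrow> Wr h ws \<noteq> 0"
proof (induction ws rule: rev_induct)
  case Nil
  then show ?case by (simp add: Wr_Nil)
next
  case (snoc w ws)
  define k where "k = length ws"
  define xs where "xs = ws @ [w]"
  have lxs: "length xs = Suc k" by (simp add: xs_def k_def)
  have W: "Wr h ws \<noteq> 0" using snoc indep_prefix by blast
  have xs_nth: "xs ! j = (if j < k then ws ! j else w)" if "j < Suc k" for j
    using that by (simp add: xs_def k_def nth_append)
  show ?case
  proof
    assume W0: "Wr h (ws @ [w]) = 0"
    let ?M = "Wmat h xs"
    have Mc: "?M \<in> carrier_mat (Suc k) (Suc k)" using Wmat_carrier[of h xs] lxs by simp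
    obtain c where c: "c \<in> carrier_vec (Suc k)" "c \<noteq> 0\<^sub>v (Suc k)" "?M *\<^sub>v c = 0\<^sub>v (Suc k)"
      using det_0_iff_vec_prod_zero_field[OF Mc] W0 unfolding Wr_Wmat xs_def by blast
    have R: "(\<Sum>j<Suc k. shift h i (xs ! j) * c $ j) = 0" if i: "i < Suc k" for i
    proof -
      have "(?M *\<^sub>v c) $ i = 0" using c(3) i by simp
      thus ?thesis using i c(1) lxs by (simp add: scalar_prod_def atLeast0LessThan)
    qed
    have ck: "c $ k \<noteq> 0"
    proof
      assume ck0: "c $ k = 0"
      define c' where "c' = vec k (\<lambda>j. c $ j)"
      have Wc: "Wmat h ws \<in> carrier_mat k k" using Wmat_carrier[of h ws] k_def by simp
      have "Wmat h ws *\<^sub>v c' = 0\<^sub>v k"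
      proof (rule eq_vecI)
        fix i assume "i < dim_vec (0\<^sub>v k :: K vec)"
        hence i: "i < k" by simp
        have "(Wmat h ws *\<^sub>v c') $ i = (\<Sum>j<k. shift h i (ws ! j) * c $ j)"
          using i Wc by (simp add: scalar_prod_def c'_def atLeast0LessThan k_def)
        also have "\<dots> = (\<Sum>j<Suc k. shift h i (xs ! j) * c $ j)"
          using ck0 by (simp add: xs_nth)
        also have "\<dots> = 0" using R i by simp
        finally show "(Wmat h ws *\<^sub>v c') $ i = 0\<^sub>v k $ i" using i by simp
      qed (simp add: k_def)
      moreover have "c' \<in> carrier_vec k" by (simp add: c'_def)
      ultimately have "c' = 0\<^sub>v k"
        using det_0_iff_vec_prod_zero_field[OF Wc] W unfolding Wr_Wmat by blast
      hence "c $ j = 0" if "j < k" for j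
        using that by (metis c'_def index_vec index_zero_vec(1))
      hence "c = 0\<^sub>v (Suc k)" using ck0 c(1) by (intro eq_vecI) (auto simp: less_Suc_eq)
      thus False using c(2) by simp
    qed
    define e where "e = (\<lambda>j. c $ j / c $ k)"
    have ek: "e k = 1" using ck by (simp add: e_def)
    have R': "(\<Sum>j<Suc k. shift h i (xs ! j) * e j) = 0" if i: "i < Suc k" for i
    proof -
      have "(\<Sum>j<Suc k. shift h i (xs ! j) * e j) = (\<Sum>j<Suc k. shift h i (xs ! j) * c $ j) / c $ k"
        unfolding e_def by (simp only: times_divide_eq_right sum_divide_distrib)
      thus ?thesis using R[OF i] by simp
    qed
    define d where "d = (\<lambda>j. e j - shift h 1 (e j))"
    have Rd: "(\<Sum>j<k. shift h (Suc i) (ws ! j) * d j) = 0" if i: "i < k" for i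
    proof -
      have a: "(\<Sum>j<Suc k. shift h (Suc i) (xs ! j) * e j) = 0" using R'[of "Suc i"] i by simp
      have "(\<Sum>j<Suc k. shift h (Suc i) (xs ! j) * shift h 1 (e j)) = shift h 1 (\<Sum>j<Suc k. shift h i (xs ! j) * e j)"
        by (simp add: shom.hom_sum shom.hom_mult shift_shift del: sum.lessThan_Suc)
      hence b: "(\<Sum>j<Suc k. shift h (Suc i) (xs ! j) * shift h 1 (e j)) = 0"
        using R'[of i] i by simp
      have "(\<Sum>j<Suc k. shift h (Suc i) (xs ! j) * d j) = 0"
        using a b by (simp add: d_def right_diff_distrib sum_subtractf)
      moreover have "d k = 0" using ek by (simp add: d_def)
      ultimately show ?thesis by (simp add: xs_nth)
    qed
    let ?N = "map_mat (shift h 1) (Wmat h ws)"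
    have Nc: "?N \<in> carrier_mat k k" using Wmat_carrier[of h ws] k_def by simp
    have "?N *\<^sub>v vec k d = 0\<^sub>v k"
    proof (rule eq_vecI)
      fix i assume "i < dim_vec (0\<^sub>v k :: K vec)"
      hence i: "i < k" by simp
      have "(?N *\<^sub>v vec k d) $ i = (\<Sum>j<k. shift h (Suc i) (ws ! j) * d j)"
        using i Nc by (simp add: scalar_prod_def atLeast0LessThan k_def shift_shift)
      thus "(?N *\<^sub>v vec k d) $ i = 0\<^sub>v k $ i" using Rd[OF i] i by simp
    qed (simp add: k_def)
    moreover have "det ?N \<noteq> 0" using W by (simp add: Wr_Wmat)
    moreover have "vec k d \<in> carrier_vec k" by simp
    ultimately have "vec k d = 0\<^sub>v k"
      using det_0_iff_vec_prod_zero_field[OF Nc] by blast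
    hence d0: "d j = 0" if "j < k" for j
      using that by (metis index_vec index_zero_vec(1))
    have per: "shift h 1 (e j) = e j" if "j < Suc k" for j
    proof (cases "j < k")
      case True thus ?thesis using d0[OF True] by (simp add: d_def)
    next
      case False hence "j = k" using that by simp
      thus ?thesis using ek by simp
    qed
    define \<gamma> where "\<gamma> = (\<lambda>j. SOME g. e j = kconst g)"
    have eg: "e j = kconst (\<gamma> j)" if "j < Suc k" for j
      using periodic_const[OF h per[OF that]] unfolding \<gamma>_def by (rule someI_ex)
    have "(\<Sum>j<length (ws @ [w]). kconst (\<gamma> j) * (ws @ [w]) ! j) = 0"
      using R'[of 0] eg lxs unfolding xs_def by (simp add: mult.commute)
    hence "\<gamma> k = 0" using snoc.prems unfolding indep_def k_def by simp
    hence "e k = 0" using eg[of k] by simp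
    thus False using ek by simp
  qed
qed


section \<open>The canonical operator with a given kernel and the step lemma\<close>

definition Lws :: "complex \<Rightarrow> K list \<Rightarrow> nat \<Rightarrow> K" where
  "Lws h ws = Lc h 0 ws"

lemma Lc_eq_Lws:
  assumes p: "p \<le> length ws" and W: "Wr h ws \<noteq> 0"
  shows "Lc h p ws = Lws h ws"
  unfolding Lws_def
  by (rule L_unique[OF W refl bnd_Lc bnd_Lc])
     (simp_all add: Lc_0[OF p W] Lc_0[OF _ W] Lc_kills[OF p] Lc_kills)

lemma Lws_props:
  assumes W: "Wr h ws \<noteq> 0"
  shows "bnd (length ws) (Lws h ws)" "Lws h ws 0 = 1" "\<And>x. x \<in> set ws \<Longrightarrow> op_apply h (Lws h ws) x = 0"
  unfolding Lws_def using bnd_Lc Lc_0[OF _ W] Lc_kills by auto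

lemma Lws_apply:
  assumes p: "p \<le> length ws" and W: "Wr h ws \<noteq> 0"
  shows "op_apply h (Lws h ws) y = (-1)^p * Wr h (ins p y ws) / shift h 1 (Wr h ws)"
proof -
  have "op_apply h (Lc h p ws) y = (-1)^p * Wr h (ins p y ws) / shift h 1 (Wr h ws)" by (rule Lc_apply[OF p])
  thus ?thesis using Lc_eq_Lws[OF p W] by simp
qed

lemma Lws_unique:
  assumes W: "Wr h ws \<noteq> 0" and D: "bnd (length ws) D" "D 0 = 1" "\<And>x. x \<in> set ws \<Longrightarrow> op_apply h D x = 0"
  shows "D = Lws h ws"
  by (rule L_unique[OF W refl D(1) Lws_props(1)[OF W]]) (use D Lws_props[OF W] in auto)

lemma step:
  assumes p: "p \<le> length ws" and W: "Wr h ws \<noteq> 0" and W': "Wr h (ins p w ws) \<noteq> 0"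
  shows "Lws h (ins p w ws) = sp_mult h (one_minus_tau (lnd h (Wr h (ins p w ws) / shift h 1 (Wr h ws)))) (Lws h ws)"
proof -
  define X where "X = Wr h (ins p w ws) / shift h 1 (Wr h ws)"
  have X0: "X \<noteq> 0" using W W' by (simp add: X_def)
  let ?R = "sp_mult h (one_minus_tau (lnd h X)) (Lws h ws)"
  have bR: "bnd (length (ins p w ws)) ?R"
    using bnd_sp_mult[OF bnd_omt Lws_props(1)[OF W]] p by simp
  have R0: "?R 0 = 1" using Lws_props(2)[OF W] by (simp add: sp_mult_0)
  have appR: "op_apply h ?R x = op_apply h (one_minus_tau (lnd h X)) (op_apply h (Lws h ws) x)" for x
    by (rule op_apply_mult[OF bnd_omt Lws_props(1)[OF W]])
  have kills: "op_apply h ?R x = 0" if x: "x \<in> set (ins p w ws)" for x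
  proof (cases "x = w")
    case True
    have y: "op_apply h (Lws h ws) w = (-1)^p * X" using Lws_apply[OF p W] by (simp add: X_def)
    have s1: "shift h 1 ((-1::K)^p * X) = (-1)^p * shift h 1 X"
      by (simp add: shom.hom_mult shom.hom_power shom.hom_uminus)
    have sX: "shift h 1 X \<noteq> 0" using X0 by simp
    have "op_apply h ?R w = op_apply h (one_minus_tau (lnd h X)) ((-1)^p * X)" using appR[of w] y by simp
    also have "\<dots> = (-1)^p * X - lnd h X * ((-1)^p * shift h 1 X)" by (simp only: op_apply_omt s1)
    also have "\<dots> = 0" using sX by (simp add: lnd_def)
    finally show ?thesis using True by simp
  next
    case False
    hence "x \<in> set ws" using x set_ins[OF p] by auto
    thus ?thesis unfolding appR using Lws_props(3)[OF W] by (simp add: op_apply_omt)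
  qed
  have "?R = Lws h (ins p w ws)" by (rule Lws_unique[OF W' bR R0 kills])
  thus ?thesis by (simp add: X_def)
qed

lemma basis_indep:
  assumes "is_basis_of v k W" shows "indep (map v [1..<k+1])"
  unfolding indep_def
proof (rule allI, rule impI)
  fix c :: "nat \<Rightarrow> complex"
  assume c: "(\<Sum>j<length (map v [1..<k+1]). kconst (c j) * map v [1..<k+1] ! j) = 0"
  define c' where "c' = (\<lambda>i. c (i - 1))"
  have "(\<Sum>i=1..k. kconst (c' i) * v i) = (\<Sum>j<k. kconst (c j) * v (Suc j))"
    by (simp add: c'_def sum.atLeast1_atMost_eq)
  also have "\<dots> = (\<Sum>j<length (map v [1..<k+1]). kconst (c j) * map v [1..<k+1] ! j)"
    by (intro sum.cong) (auto simp del: upt_Suc)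
  also have "\<dots> = 0" by (rule c)
  finally have "\<forall>i\<in>{1..k}. c' i = 0" using assms unfolding is_basis_of_def by blast
  thus "\<forall>j<length (map v [1..<k+1]). c j = 0"
  proof (intro allI impI)
    fix j assume "j < length (map v [1..<k+1])"
    hence "Suc j \<in> {1..k}" by (simp del: upt_Suc)
    hence "c' (Suc j) = 0" using \<open>\<forall>i\<in>{1..k}. c' i = 0\<close> by blast
    thus "c j = 0" by (simp add: c'_def)
  qed
qed

lemma basis_in:
  assumes "is_basis_of v k W" "x \<in> set (map v [1..<k+1])" shows "x \<in> W"
  using assms unfolding is_basis_of_def by auto

lemma map_upt_split:
  assumes "a \<le> m" shows "map v [1..<m+1] = map v [1..<a+1] @ map v [a+1..<m+1]"
proof -
  have "[1..<a+1+(m-a)] = [1..<a+1] @ [a+1..<a+1+(m-a)]"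
    by (rule upt_add_eq_append) simp
  hence "[1..<m+1] = [1..<a+1] @ [a+1..<m+1]" using assms by simp
  thus ?thesis by simp
qed

lemma kernel_comb:
  assumes "\<forall>x\<in>set xs. op_apply h D x = 0"
  shows "op_apply h D (\<Sum>j<length xs. kconst (c j) * xs ! j) = 0"
  using assms by (simp add: op_apply_sum op_apply_kconst)


theorem proposition2p3:
  fixes h :: complex and m n :: nat
    and D0 D1 :: "nat \<Rightarrow> K"
    and v u :: "nat \<Rightarrow> K"
    and s :: "nat \<Rightarrow> int"
    and f :: "nat \<Rightarrow> K"
  assumes h: "h \<noteq> 0"
    and ops: "is_diff_op D0" "is_diff_op D1"
    and const: "D1 0 = 1" "D0 0 = D1 0"
    and ords: "op_ord D0 = m" "op_ord D1 = n"
    and cf: "completely_factorable h D0" "completely_factorable h D1"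
    and minimal: "\<And>E0 E1. is_diff_op E0 \<Longrightarrow> is_diff_op E1 \<Longrightarrow> E1 \<noteq> (\<lambda>_. 0) \<Longrightarrow>
                     sp_mult h (sp_mult h D0 (sp_inv h D1)) E1 = E0 \<Longrightarrow> n \<le> op_ord E1"
    and V: "is_basis_of v m (op_kernel h D0)"
    and U: "is_basis_of u n (op_kernel h D1)"
    and s: "s \<in> parity_seqs m n"
    and f_def: "\<And>i. i \<in> {1..m+n} \<Longrightarrow> f i =
        (if s i = 1
         then lnd h (Wr_vu h v (s_plus (m+n) s i + 1) u (s_minus (m+n) s i) /
                     shift h 1 (Wr_vu h v (s_plus (m+n) s i) u (s_minus (m+n) s i)))
         else lnd h (Wr_vu h v (s_plus (m+n) s i) u (s_minus (m+n) s i + 1) /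
                     shift h 1 (Wr_vu h v (s_plus (m+n) s i) u (s_minus (m+n) s i))))"
  shows "sp_mult h D0 (sp_inv h D1) =
         sp_prod h (map (\<lambda>i. if s i = 1 then one_minus_tau (f i)
                            else sp_inv h (one_minus_tau (f i))) [1..<m+n+1])"
proof -
  define N where "N = m + n"
  define vs where "vs = (\<lambda>a. map v [1..<a+1])"
  define us where "us = (\<lambda>b. map u [1..<b+1])"
  define Lab where "Lab = (\<lambda>a b. Lws h (vs a @ us b))"
  have bD0: "bnd m D0" using bnd_op_ord[OF ops(1)] ords(1) by simp
  have bD1: "bnd n D1" using bnd_op_ord[OF ops(2)] ords(2) by simp
  have c1: "D1 0 = 1" using const by simp
  have c0: "D0 0 = 1" using const by simp
  have lvs: "length (vs a) = a" for a by (simp add: vs_def)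
  have lus: "length (us b) = b" for b by (simp add: us_def)
  have vs0: "vs 0 = []" by (simp add: vs_def)
  have us0: "us 0 = []" by (simp add: us_def)
  have kV: "\<forall>x\<in>set (vs m). op_apply h D0 x = 0"
    using basis_in[OF V] unfolding vs_def op_kernel_def by blast
  have kU: "\<forall>x\<in>set (us n). op_apply h D1 x = 0"
    using basis_in[OF U] unfolding us_def op_kernel_def by blast
  have iV: "indep (vs m)" using basis_indep[OF V] by (simp add: vs_def)
  have iU: "indep (us n)" using basis_indep[OF U] by (simp add: us_def)
  have iVU: "indep (vs m @ us n)"
    unfolding indep_def
  proof (rule allI, rule impI)
    fix c :: "nat \<Rightarrow> complex"
    assume c: "(\<Sum>j<length (vs m @ us n). kconst (c j) * (vs m @ us n) ! j) = 0"
    define A where "A = (\<Sum>j<length (vs m). kconst (c j) * vs m ! j)"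
    define B where "B = (\<Sum>j<length (us n). kconst (c (length (vs m) + j)) * us n ! j)"
    have AB: "A + B = 0"
      using sum_append_split[of "\<lambda>j x. kconst (c j) * x" "vs m" "us n"] c by (simp add: A_def B_def)
    have A0: "op_apply h D0 A = 0" unfolding A_def by (rule kernel_comb[OF kV])
    have B1: "op_apply h D1 B = 0" unfolding B_def by (rule kernel_comb[OF kU])
    have "A = - B" using AB by (simp add: eq_neg_iff_add_eq_0)
    hence A1: "op_apply h D1 A = 0" using B1 by (simp add: op_apply_uminus)
    have Az: "A = 0"
    proof (rule ccontr)
      assume "A \<noteq> 0"
      show False
        by (rule no_common_kernel[of m D0 n D1 h A, OF bD0 bD1 c0 c1 minimal A0 A1 \<open>A \<noteq> 0\<close>])
    qed
    hence Bz: "B = 0" using AB by simp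
    have cA: "\<forall>j<length (vs m). c j = 0" using iV Az unfolding indep_def A_def by blast
    have "\<forall>c'. (\<Sum>j<length (us n). kconst (c' j) * us n ! j) = 0 \<longrightarrow> (\<forall>j<length (us n). c' j = 0)"
      using iU unfolding indep_def by blast
    hence "(\<Sum>j<length (us n). kconst (c (length (vs m) + j)) * us n ! j) = 0 \<longrightarrow> (\<forall>j<length (us n). c (length (vs m) + j) = 0)"
      by (rule spec)
    hence cB: "\<forall>j<length (us n). c (length (vs m) + j) = 0"
      using Bz unfolding B_def by (rule mp)
    show "\<forall>j<length (vs m @ us n). c j = 0"
    proof (intro allI impI)
      fix j assume j: "j < length (vs m @ us n)"
      show "c j = 0"
      proof (cases "j < length (vs m)")
        case True thus ?thesis using cA by simp
      next
        case False
        define j' where "j' = j - length (vs m)"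
        have "j = length (vs m) + j'" "j' < length (us n)" using j False by (auto simp: j'_def)
        thus ?thesis using cB by simp
      qed
    qed
  qed
  have iab: "indep (vs a @ us b)" if ab: "a \<le> m" "b \<le> n" for a b
  proof -
    have "vs m @ us n = vs a @ map v [a+1..<m+1] @ us b @ map u [b+1..<n+1]"
      using map_upt_split[OF ab(1), of v] map_upt_split[OF ab(2), of u] by (simp add: vs_def us_def)
    hence "indep (vs a @ map v [a+1..<m+1] @ (us b @ map u [b+1..<n+1]))" using iVU by simp
    hence "indep (vs a @ (us b @ map u [b+1..<n+1]))" by (rule indep_drop_middle)
    hence "indep ((vs a @ us b) @ map u [b+1..<n+1])" by simp
    thus ?thesis by (rule indep_prefix)
  qed
  have Wab: "Wr h (vs a @ us b) \<noteq> 0" if "a \<le> m" "b \<le> n" for a b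
    using Cas_nonzero[OF h iab[OF that]] .
  have D0L: "D0 = Lab m 0"
    unfolding Lab_def
    by (rule Lws_unique[OF Wab[of m 0]]) (use bD0 c0 kV in \<open>simp_all add: lvs us0\<close>)
  have D1L: "D1 = Lab 0 n"
    unfolding Lab_def
    by (rule Lws_unique[OF Wab[of 0 n]]) (use bD1 c1 kU in \<open>simp_all add: lus vs0\<close>)
  have vstep: "Lab (Suc a) b = sp_mult h (one_minus_tau (lnd h (Wr h (vs (Suc a) @ us b) / shift h 1 (Wr h (vs a @ us b))))) (Lab a b)"
     if ab: "a < m" "b \<le> n" for a b
  proof -
    have e: "vs (Suc a) @ us b = ins a (v (Suc a)) (vs a @ us b)"
      using lvs[of a] by (simp add: ins_def vs_def)
    have W': "Wr h (ins a (v (Suc a)) (vs a @ us b)) \<noteq> 0" using Wab[of "Suc a" b] ab e by simp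
    show ?thesis unfolding Lab_def e
      by (rule step[OF _ Wab[OF _ ab(2)] W']) (use ab in \<open>simp_all add: lvs\<close>)
  qed
  have ustep: "Lab a (Suc b) = sp_mult h (one_minus_tau (lnd h (Wr h (vs a @ us (Suc b)) / shift h 1 (Wr h (vs a @ us b))))) (Lab a b)"
     if ab: "a \<le> m" "b < n" for a b
  proof -
    have e: "vs a @ us (Suc b) = ins (a + b) (u (Suc b)) (vs a @ us b)"
      using lvs[of a] lus[of b] by (simp add: ins_def us_def)
    have W': "Wr h (ins (a + b) (u (Suc b)) (vs a @ us b)) \<noteq> 0" using Wab[of a "Suc b"] ab e by simp
    show ?thesis unfolding Lab_def e
      by (rule step[OF _ Wab[OF ab(1)] W']) (use ab in \<open>simp_all add: lvs lus\<close>)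
  qed
  define sp where "sp = s_plus N s"
  define sm where "sm = s_minus N s"
  have s_pm: "s i = 1 \<or> s i = -1" if "i \<in> {1..N}" for i
    using s that by (simp add: parity_seqs_def N_def)
  have cardP: "card {j\<in>{1..N}. s j = 1} = m" using s by (simp add: parity_seqs_def N_def)
  have cardM: "card {j\<in>{1..N}. s j = -1} = n"
  proof -
    have u: "{1..N} = {j\<in>{1..N}. s j = 1} \<union> {j\<in>{1..N}. s j = -1}" using s_pm by blast
    have "card {1..N} = card {j\<in>{1..N}. s j = 1} + card {j\<in>{1..N}. s j = -1}"
      by (subst u, rule card_Un_disjoint) auto
    thus ?thesis using cardP by (simp add: N_def)
  qed
  have sp_le: "sp i \<le> m" for i
    unfolding sp_def s_plus_def cardP[symmetric] by (rule card_mono) auto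
  have sm_le: "sm i \<le> n" for i
    unfolding sm_def s_minus_def cardM[symmetric] by (rule card_mono) auto
  have sp_N: "sp N = 0" unfolding sp_def s_plus_def by simp
  have sm_N1: "sm (Suc N) = n"
  proof -
    have "{j\<in>{1..N}. j < Suc N \<and> s j = -1} = {j\<in>{1..N}. s j = -1}" by auto
    thus ?thesis using cardM by (simp add: sm_def s_minus_def)
  qed
  have sp_0: "sp 0 = m"
  proof -
    have "{j\<in>{1..N}. 0 < j \<and> s j = 1} = {j\<in>{1..N}. s j = 1}" by auto
    thus ?thesis using cardP by (simp add: sp_def s_plus_def)
  qed
  have sm_1: "sm 1 = 0" unfolding sm_def s_minus_def by simp
  have sp_step: "sp (i - 1) = sp i + (if s i = 1 then 1 else 0)" if i: "i \<in> {1..N}" for i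
  proof -
    let ?S = "{j\<in>{1..N}. i < j \<and> s j = 1}"
    have ar: "\<And>x. (i - 1 < x) = (x = i \<or> i < x)" using i by auto
    have e: "{j\<in>{1..N}. i - 1 < j \<and> s j = 1} = (if s i = 1 then insert i ?S else ?S)"
      using i unfolding ar by auto
    show ?thesis unfolding sp_def s_plus_def e by simp
  qed
  have sm_step: "sm (Suc i) = sm i + (if s i = -1 then 1 else 0)" if i: "i \<in> {1..N}" for i
  proof -
    let ?S = "{j\<in>{1..N}. j < i \<and> s j = -1}"
    have ar: "\<And>x. (x < Suc i) = (x = i \<or> x < i)" by auto
    have e: "{j\<in>{1..N}. j < Suc i \<and> s j = -1} = (if s i = -1 then insert i ?S else ?S)"
      using i unfolding ar by auto
    show ?thesis unfolding sm_def s_minus_def e by simp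
  qed
  define F where "F = (\<lambda>i. if s i = 1 then one_minus_tau (f i) else sp_inv h (one_minus_tau (f i)))"
  have main: "sp_prod h (map F [Suc (N - k)..<N+1]) = sp_mult h (Lab (sp (N - k)) (sm (Suc (N - k)))) (sp_inv h D1)"
    if "k \<le> N" for k
    using that
  proof (induction k)
    case 0
    show ?case using sp_N sm_N1 D1L sp_inv[of D1 h] c1 by simp
  next
    case (Suc k)
    define i where "i = N - k"
    have i: "i \<in> {1..N}" using Suc.prems by (auto simp: i_def)
    have ik: "N - Suc k = i - 1" "Suc (N - Suc k) = i" using Suc.prems by (auto simp: i_def)
    have ups: "[i..<N+1] = i # [Suc i..<N+1]" using i by (simp add: upt_conv_Cons)
    have IH: "sp_prod h (map F [Suc i..<N+1]) = sp_mult h (Lab (sp i) (sm (Suc i))) (sp_inv h D1)"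
      using Suc.IH Suc.prems by (simp add: i_def)
    have iN: "i \<in> {1..m+n}" using i by (simp add: N_def)
    have key: "sp_mult h (F i) (Lab (sp i) (sm (Suc i))) = Lab (sp (i - 1)) (sm i)"
    proof (cases "s i = 1")
      case True
      have fi: "f i = lnd h (Wr h (vs (Suc (sp i)) @ us (sm i)) / shift h 1 (Wr h (vs (sp i) @ us (sm i))))"
        using f_def[OF iN] True by (simp add: Wr_vu_def vs_def us_def sp_def sm_def N_def)
      have e1: "sp (i - 1) = Suc (sp i)" "sm (Suc i) = sm i" using sp_step[OF i] sm_step[OF i] True by simp_all
      have "Suc (sp i) \<le> m" using sp_le[of "i - 1"] e1 by simp
      hence "Lab (Suc (sp i)) (sm i) = sp_mult h (one_minus_tau (f i)) (Lab (sp i) (sm i))"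
        using vstep[of "sp i" "sm i"] sm_le[of i] fi by simp
      thus ?thesis using True e1 by (simp add: F_def)
    next
      case False
      hence m1: "s i = -1" using s_pm[OF i] by simp
      have fi: "f i = lnd h (Wr h (vs (sp i) @ us (Suc (sm i))) / shift h 1 (Wr h (vs (sp i) @ us (sm i))))"
        using f_def[OF iN] m1 by (simp add: Wr_vu_def vs_def us_def sp_def sm_def N_def)
      have e1: "sp (i - 1) = sp i" "sm (Suc i) = Suc (sm i)" using sp_step[OF i] sm_step[OF i] m1 by simp_all
      have "Suc (sm i) \<le> n" using sm_le[of "Suc i"] e1 by simp
      hence L: "Lab (sp i) (Suc (sm i)) = sp_mult h (one_minus_tau (f i)) (Lab (sp i) (sm i))"
        using ustep[of "sp i" "sm i"] sp_le[of i] fi by simp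
      have "sp_mult h (F i) (Lab (sp i) (sm (Suc i))) =
            sp_mult h (sp_inv h (one_minus_tau (f i))) (sp_mult h (one_minus_tau (f i)) (Lab (sp i) (sm i)))"
        using m1 e1 L by (simp add: F_def)
      also have "\<dots> = Lab (sp i) (sm i)" by (rule sp_cancel_left) simp
      finally show ?thesis using e1 by simp
    qed
    have "sp_prod h (map F [Suc (N - Suc k)..<N+1]) = sp_mult h (F i) (sp_prod h (map F [Suc i..<N+1]))"
      unfolding ik(2) ups by (simp del: upt_Suc)
    also have "\<dots> = sp_mult h (sp_mult h (F i) (Lab (sp i) (sm (Suc i)))) (sp_inv h D1)"
      unfolding IH by (simp add: sp_mult_assoc)
    also have "\<dots> = sp_mult h (Lab (sp (N - Suc k)) (sm (Suc (N - Suc k)))) (sp_inv h D1)"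
      using i by (simp only: key ik(1)) simp
    finally show ?case .
  qed
  have "sp_prod h (map F [1..<N+1]) = sp_mult h (Lab m 0) (sp_inv h D1)"
    using main[of N] sp_0 sm_1 by simp
  thus ?thesis using D0L by (simp add: F_def N_def)
qed

end
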